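(* Let $Y\in\{0,1\}$, $\mathbf{B}\in\mathbb{R}^n$, and for $i=1,\dots,r$ let $Z_i\in\mathbb{R}$, $A_i\in\{0,1\}$. Let $\sigma(x)=1/(1+e^{-x})$. Assume: (C1) $\mathbf{p}(Y=1\mid\mathbf{b})=\sigma(\mathbf{w}^\top\mathbf{b}+t)$ for some $\mathbf{w}\in\mathbb{R}^n$, $t\in\mathbb{R}$; (C2) for all $\mathcal{I}\subseteq[r]$: $\mathbf{p}(\mathbf{A}_{\mathcal{I}}=\mathbf{1}\mid\mathbf{b},y)=\prod_{i\in\mathcal{I}}\mathbf{p}(A_i=1\mid\mathbf{b},y)$; (C3) for all $\mathcal{I}\subseteq[r]$: $\mathbf{p}(\mathbf{z}_{\mathcal{I}}\mid\mathbf{b},y,\mathbf{A}_{\mathcal{I}}=\mathbf{1})=\prod_{i\in\mathcal{I}}\mathbf{p}(z_i\mid\mathbf{b},y,A_i=1)$; (C4) there is a function $N(\mathbf{b})>0$ and $\mathbf{u}_i\in\mathbb{R}^n$, $\lambda_i\in\mathbb{R}$ with $\mathbf{p}(A_i=1\mid\mathbf{b},Y=1)=N(\mathbf{b})\sigma(\mathbf{u}_i^\top\mathbf{b}+\lambda_i)$ and $\mathbf{p}(A_i=1\mid\mathbf{b},Y=0)=N(\mathbf{b})-\mathbf{p}(A_i=1\mid\mathbf{b},Y=1)$; (C5) $(Z_i\mid\mathbf{b},y,A_i=1)\sim\mathcal{N}(\mathbf{v}_i^\top\mathbf{b}+\tau_i(y),\eta^2)$ for some $\mathbf{v}_i\in\mathbb{R}^n$,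 $\tau_i(0),\tau_i(1)\in\mathbb{R}$, $\eta>0$. Then for every $\mathcal{I}\subseteq[r]$, $$\frac{\mathbf{p}(Y=1\mid\mathbf{b},\mathbf{z}_{\mathcal{I}},\mathbf{A}_{\mathcal{I}}=\mathbf{1})}{\mathbf{p}(Y=0\mid\mathbf{b},\mathbf{z}_{\mathcal{I}},\mathbf{A}_{\mathcal{I}}=\mathbf{1})}=\exp\Big[\mathbf{w}^\top\mathbf{b}+t+\sum_{i\in\mathcal{I}}\big((\mathbf{u}_i-\boldsymbol\gamma_i)^\top\mathbf{b}+\beta_i z_i+\lambda_i+\theta_i\big)\Big],$$ where $\beta_i=\eta^{-2}(\tau_i(1)-\tau_i(0))$, $\boldsymbol\gamma_i=\beta_i\mathbf{v}_i$, and $\theta_i=\tfrac12\eta^{-2}(\tau_i(0)^2-\tau_i(1)^2)$. In particular, each such conditional distribution is of logistic-regression form.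
   Context: For a vector $\mathbf{v}$ and $\mathcal{I}\subseteq[r]=\{1,\dots,r\}$, $\mathbf{v}_{\mathcal{I}}$ is the subvector with indices in $\mathcal{I}$; $\mathbf{A}_{\mathcal{I}}=\mathbf{1}$ means $A_i=1$ for all $i\in\mathcal{I}$ (other features marginalized). $Z_i$ is only observed when $A_i=1$. *)

theory Defs
  imports "HOL-Probability.Distributions"
begin

definition sigmoid :: "real \<Rightarrow> real" where
  "sigmoid x = 1 / (1 + exp (- x))"

text \<open>The model is described through its conditional densities / probabilities
 (Y is encoded as bool, True = 1):
  pY b          = p(Y = 1 | b)            (so p(Y = 0 | b) = 1 - pY b)
  pA I b y      = p(A_I = 1 | b, y)
  pZ I z b y    = p(z_I | b, y, A_I = 1)  (density; only z i for i in I matters).\<close>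

definition cond_joint ::
  "(real^'n::finite \<Rightarrow> real) \<Rightarrow> (nat set \<Rightarrow> (real^'n) \<Rightarrow> bool \<Rightarrow> real)
   \<Rightarrow> (nat set \<Rightarrow> (nat \<Rightarrow> real) \<Rightarrow> (real^'n) \<Rightarrow> bool \<Rightarrow> real)
   \<Rightarrow> nat set \<Rightarrow> (real^'n) \<Rightarrow> (nat \<Rightarrow> real) \<Rightarrow> bool \<Rightarrow> real" where
  "cond_joint pY pA pZ I b z y =
     (if y then pY b else 1 - pY b) * pA I b y * pZ I z b y"

definition posterior ::
  "(real^'n::finite \<Rightarrow> real) \<Rightarrow> (nat set \<Rightarrow> (real^'n) \<Rightarrow> bool \<Rightarrow> real)
   \<Rightarrow> (nat set \<Rightarrow> (nat \<Rightarrow> real) \<Rightarrow> (real^'n) \<Rightarrow> bool \<Rightarrow> real)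
   \<Rightarrow> nat set \<Rightarrow> (real^'n) \<Rightarrow> (nat \<Rightarrow> real) \<Rightarrow> bool \<Rightarrow> real" where
  "posterior pY pA pZ I b z y =
     cond_joint pY pA pZ I b z y /
       (cond_joint pY pA pZ I b z True + cond_joint pY pA pZ I b z False)"

end

theory Submission
  imports Defs
begin

lemma sig_alt: "sigmoid x = exp x / (exp x + 1)"
proof -
  have "exp (-x) = 1 / exp x" by (simp add: exp_minus field_simps)
  moreover have "1 / (1 + 1 / exp x) = exp x / (exp x + 1)"
  proof -
    have a: "exp x > 0" by simp
    have "1 + 1 / exp x = (exp x + 1) / exp x" using a by (simp add: field_simps)
    then show ?thesis by simp
  qed
  ultimately show ?thesis unfolding sigmoid_def by simp
qed

lemma sig_ratio: "sigmoid x = exp x * (1 - sigmoid x)"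
proof -
  have p: "exp x + 1 > 0" by (smt (verit) exp_gt_zero)
  show ?thesis unfolding sig_alt using p by (simp add: field_simps)
qed

lemma sig_pos1: "1 - sigmoid x > 0"
proof -
  have p: "1 + exp (-x) > 0" by (smt (verit) exp_gt_zero)
  have "1 - sigmoid x = exp (-x) / (1 + exp (-x))"
    unfolding sigmoid_def using p by (simp add: field_simps)
  then show ?thesis using p by simp
qed

lemma normal_ratio:
  assumes "\<eta> > 0"
  shows "normal_density (m + a) \<eta> z =
    exp ((a - c) / \<eta>\<^sup>2 * z - (a - c) / \<eta>\<^sup>2 * m + (c^2 - a^2) / (2 * \<eta>\<^sup>2))
    * normal_density (m + c) \<eta> z"
proof -
  have e: "-(z - (m + a))\<^sup>2 / (2 * \<eta>\<^sup>2) =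
     ((a - c) / \<eta>\<^sup>2 * z - (a - c) / \<eta>\<^sup>2 * m + (c^2 - a^2) / (2 * \<eta>\<^sup>2))
     + (-(z - (m + c))\<^sup>2 / (2 * \<eta>\<^sup>2))"
    using assms by (simp add: field_simps power2_eq_square)
  show ?thesis unfolding normal_density_def e exp_add by simp
qed

lemma normal_pos: "\<eta> > 0 \<Longrightarrow> normal_density m \<eta> z > 0"
  unfolding normal_density_def by simp

theorem mainTheorem3:
  fixes r :: nat
    and pY :: "real^'n \<Rightarrow> real"
    and pA :: "nat set \<Rightarrow> real^'n \<Rightarrow> bool \<Rightarrow> real"
    and pZ :: "nat set \<Rightarrow> (nat \<Rightarrow> real) \<Rightarrow> real^'n \<Rightarrow> bool \<Rightarrow> real"
    and w :: "real^'n" and t :: real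
    and u v :: "nat \<Rightarrow> real^'n" and lam :: "nat \<Rightarrow> real"
    and \<tau> :: "nat \<Rightarrow> bool \<Rightarrow> real" and \<eta> :: real
  assumes C1: "\<And>b. pY b = sigmoid (w \<bullet> b + t)"
    and C2: "\<And>I b y. I \<subseteq> {1..r} \<Longrightarrow> pA I b y = (\<Prod>i\<in>I. pA {i} b y)"
    and C3: "\<And>I z b y. I \<subseteq> {1..r} \<Longrightarrow> pZ I z b y = (\<Prod>i\<in>I. pZ {i} z b y)"
    and C4: "\<exists>N :: real^'n \<Rightarrow> real. \<forall>b. N b > 0 \<and>
               (\<forall>i\<in>{1..r}. pA {i} b True = N b * sigmoid (u i \<bullet> b + lam i)
                           \<and> pA {i} b False = N b - pA {i} b True)"
    and \<eta>_pos: "\<eta> > 0"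
    and C5: "\<And>i z b y. i \<in> {1..r} \<Longrightarrow>
               pZ {i} z b y = normal_density (v i \<bullet> b + \<tau> i y) \<eta> (z i)"
  shows "\<forall>I b z. I \<subseteq> {1..r} \<longrightarrow>
     (let \<beta> = (\<lambda>i. (\<tau> i True - \<tau> i False) / \<eta>\<^sup>2);
          \<gamma> = (\<lambda>i. \<beta> i *\<^sub>R v i);
          \<theta> = (\<lambda>i. (\<tau> i False ^ 2 - \<tau> i True ^ 2) / (2 * \<eta>\<^sup>2))
      in posterior pY pA pZ I b z True / posterior pY pA pZ I b z False
         = exp (w \<bullet> b + t +
               (\<Sum>i\<in>I. (u i - \<gamma> i) \<bullet> b + \<beta> i * z i + lam i + \<theta> i)))"
proof (intro allI impI)
  fix I b z assume I: "I \<subseteq> {1..r}"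
  obtain N where N: "\<And>b. N b > 0"
    "\<And>b i. i \<in> {1..r} \<Longrightarrow> pA {i} b True = N b * sigmoid (u i \<bullet> b + lam i)
                           \<and> pA {i} b False = N b - pA {i} b True"
    using C4 by blast
  define \<beta> where "\<beta> = (\<lambda>i. (\<tau> i True - \<tau> i False) / \<eta>\<^sup>2)"
  define \<gamma> where "\<gamma> = (\<lambda>i. \<beta> i *\<^sub>R v i)"
  define \<theta> where "\<theta> = (\<lambda>i. (\<tau> i False ^ 2 - \<tau> i True ^ 2) / (2 * \<eta>\<^sup>2))"
  define e where "e = (\<lambda>i. (u i - \<gamma> i) \<bullet> b + \<beta> i * z i + lam i + \<theta> i)"
  define g where "g = (\<lambda>y i. pA {i} b y * pZ {i} z b y)"
  have gi: "g True i = exp (e i) * g False i \<and> g False i > 0" if i: "i \<in> I" for i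
  proof -
    have ir: "i \<in> {1..r}" using i I by blast
    define s where "s = sigmoid (u i \<bullet> b + lam i)"
    have T: "pA {i} b True = N b * s" and F: "pA {i} b False = N b * (1 - s)"
      using N(2)[OF ir, of b] unfolding s_def by (auto simp: algebra_simps)
    have A1: "pA {i} b True = exp (u i \<bullet> b + lam i) * pA {i} b False"
      unfolding T F using sig_ratio[of "u i \<bullet> b + lam i"] unfolding s_def[symmetric] by simp
    have A0: "pA {i} b False > 0"
      unfolding F using N(1)[of b] sig_pos1[of "u i \<bullet> b + lam i"] unfolding s_def[symmetric] by simp
    have Z1: "pZ {i} z b True = exp (\<beta> i * z i - \<beta> i * (v i \<bullet> b) + \<theta> i) * pZ {i} z b False"
      unfolding C5[OF ir] \<beta>_def \<theta>_def by (rule normal_ratio[OF \<eta>_pos])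
    have Z0: "pZ {i} z b False > 0" unfolding C5[OF ir] by (rule normal_pos[OF \<eta>_pos])
    have "e i = (u i \<bullet> b + lam i) + (\<beta> i * z i - \<beta> i * (v i \<bullet> b) + \<theta> i)"
      unfolding e_def \<gamma>_def by (simp add: inner_diff_left algebra_simps)
    then show ?thesis unfolding g_def A1 Z1 using A0 Z0 by (simp add: exp_add)
  qed
  have fin: "finite I" using I finite_subset by blast
  have J: "cond_joint pY pA pZ I b z y = (if y then pY b else 1 - pY b) * prod (g y) I" for y
    unfolding cond_joint_def g_def C2[OF I] C3[OF I] prod.distrib by simp
  have P1: "prod (g True) I = exp (sum e I) * prod (g False) I"
  proof -
    have "prod (g True) I = (\<Prod>i\<in>I. exp (e i) * g False i)"
      using gi by (intro prod.cong) auto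
    then show ?thesis by (simp add: exp_sum fin prod.distrib)
  qed
  have P0: "prod (g False) I > 0" using gi by (simp add: prod_pos)
  have Y1: "pY b = exp (w \<bullet> b + t) * (1 - pY b)" and Y0: "1 - pY b > 0"
    unfolding C1 by (rule sig_ratio, rule sig_pos1)
  have JT: "cond_joint pY pA pZ I b z True = exp (w \<bullet> b + t + sum e I) * cond_joint pY pA pZ I b z False"
    unfolding J using Y1 P1 by (simp add: exp_add)
  have JF: "cond_joint pY pA pZ I b z False > 0" unfolding J using Y0 P0 by simp
  have "posterior pY pA pZ I b z True / posterior pY pA pZ I b z False
     = exp (w \<bullet> b + t + sum e I)"
  proof -
    have D: "cond_joint pY pA pZ I b z True + cond_joint pY pA pZ I b z False > 0"
      using JT JF by (simp add: add_pos_pos)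
    have gen: "\<And>jt jf E::real. jf > 0 \<Longrightarrow> jt + jf > 0 \<Longrightarrow> jt = E * jf \<Longrightarrow>
        (jt / (jt + jf)) / (jf / (jt + jf)) = E"
    proof -
      fix jt jf E :: real assume a: "jf > 0" "jt + jf > 0" "jt = E * jf"
      have "(jt / (jt + jf)) / (jf / (jt + jf)) = jt / jf" using a by simp
      then show "(jt / (jt + jf)) / (jf / (jt + jf)) = E" using a by simp
    qed
    show ?thesis unfolding posterior_def by (rule gen[OF JF D JT])
  qed
  then show "let \<beta> = (\<lambda>i. (\<tau> i True - \<tau> i False) / \<eta>\<^sup>2);
          \<gamma> = (\<lambda>i. \<beta> i *\<^sub>R v i);
          \<theta> = (\<lambda>i. (\<tau> i False ^ 2 - \<tau> i True ^ 2) / (2 * \<eta>\<^sup>2))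
      in posterior pY pA pZ I b z True / posterior pY pA pZ I b z False
         = exp (w \<bullet> b + t +
               (\<Sum>i\<in>I. (u i - \<gamma> i) \<bullet> b + \<beta> i * z i + lam i + \<theta> i))"
    unfolding Let_def e_def \<beta>_def \<gamma>_def \<theta>_def by simp
qed

end
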